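(* Let $X$ be a Tychonoff space and $x \in X$. If player II has a winning strategy in the game $\mathsf{G}_1(\pi\mathcal{N}_x, \pi\mathcal{N}_x)$, then $X$ is supertight at $x$.
   Context: A family $\mathcal{S}$ of nonempty subsets of $X$ is a $\pi$-network at $x$ if every neighborhood of $x$ contains an element of $\mathcal{S}$. $\pi\mathcal{N}_x$ denotes the collection of all $\pi$-networks at $x$ consisting of finite sets. The game $\mathsf{G}_1(\pi\mathcal{N}_x,\pi\mathcal{N}_x)$: in each inning $n \in \omega$ player I chooses $\mathcal{S}_n \in \pi\mathcal{N}_x$, then player II chooses $S_n \in \mathcal{S}_n$; II wins iff $\{S_n : n \in \omega\} \in \pi\mathcal{N}_x$. $X$ is supertight at $x$ if for every $\pi$-network $\mathcal{P}$ at $x$ consisting of countable sets there is a countable subfamily $\mathcal{Q} \subset \mathcal{P}$ which is still a $\pi$-network at $x$. *)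

theory Defs
  imports "HOL-Analysis.Analysis"
begin

text \<open>A family S of nonempty subsets of X is a pi-network at x if every
neighbourhood of x contains an element of S.  Neighbourhoods are represented by
open sets containing x (equivalent for this purpose).\<close>
definition pi_network :: "'a topology \<Rightarrow> 'a \<Rightarrow> 'a set set \<Rightarrow> bool" where
  "pi_network X x S \<longleftrightarrow>
     (\<forall>A\<in>S. A \<noteq> {} \<and> A \<subseteq> topspace X) \<and>
     (\<forall>U. openin X U \<and> x \<in> U \<longrightarrow> (\<exists>A\<in>S. A \<subseteq> U))"

definition piN :: "'a topology \<Rightarrow> 'a \<Rightarrow> 'a set set set" where
  "piN X x = {S. pi_network X x S \<and> (\<forall>A\<in>S. finite A)}"

text \<open>Player II has a winning strategy in G_1(A, B): a strategy maps the
(nonempty) list of I's moves so far to a choice in the last move; it is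
winning if for every play of I the choices are legal and the set of choices lies in B.\<close>
definition II_wins_G1 :: "'c set set \<Rightarrow> 'c set set \<Rightarrow> bool" where
  "II_wins_G1 \<A> \<B> \<longleftrightarrow>
     (\<exists>\<sigma> :: 'c set list \<Rightarrow> 'c.
        \<forall>f :: nat \<Rightarrow> 'c set. (\<forall>n. f n \<in> \<A>) \<longrightarrow>
          (\<forall>n. \<sigma> (map f [0..<Suc n]) \<in> f n) \<and>
          range (\<lambda>n. \<sigma> (map f [0..<Suc n])) \<in> \<B>)"

definition tychonoff_space :: "'a topology \<Rightarrow> bool" where
  "tychonoff_space X \<longleftrightarrow> t1_space X \<and> completely_regular_space X"

definition supertight_at :: "'a topology \<Rightarrow> 'a \<Rightarrow> bool" where
  "supertight_at X x \<longleftrightarrow>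
     (\<forall>P. pi_network X x P \<and> (\<forall>A\<in>P. countable A) \<longrightarrow>
        (\<exists>Q\<subseteq>P. countable Q \<and> pi_network X x Q))"

end

theory Submission
  imports Defs
begin

lemma strat_legal:
  assumes win: "\<forall>f :: nat \<Rightarrow> 'c set. (\<forall>n. f n \<in> \<A>) \<longrightarrow>
          (\<forall>n. \<sigma> (map f [0..<Suc n]) \<in> f n) \<and> range (\<lambda>n. \<sigma> (map f [0..<Suc n])) \<in> \<B>"
    and s: "set s \<subseteq> \<A>" and S: "S \<in> \<A>"
  shows "\<sigma> (s @ [S]) \<in> S"
proof -
  define f where "f n = (if n < length s then s ! n else S)" for n
  have fA: "\<forall>n. f n \<in> \<A>" using s S by (auto simp: f_def)
  have "map f [0..<Suc (length s)] = s @ [S]"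
    by (rule nth_equalityI) (auto simp: f_def nth_append)
  moreover have "f (length s) = S" by (simp add: f_def)
  ultimately show ?thesis using win fA by metis
qed

theorem theorem4p8:
  fixes X :: "'a topology" and x :: 'a
  assumes "tychonoff_space X"
    and "x \<in> topspace X"
    and "II_wins_G1 (piN X x) (piN X x)"
  shows "supertight_at X x"
proof -
  obtain \<sigma> :: "'a set set list \<Rightarrow> 'a set" where win:
    "\<forall>f :: nat \<Rightarrow> 'a set set. (\<forall>n. f n \<in> piN X x) \<longrightarrow>
          (\<forall>n. \<sigma> (map f [0..<Suc n]) \<in> f n) \<and> range (\<lambda>n. \<sigma> (map f [0..<Suc n])) \<in> piN X x"
    using assms(3) unfolding II_wins_G1_def by blast
  have L2: "\<exists>W. openin X W \<and> x \<in> W \<and> (\<forall>y\<in>W. \<exists>S\<in>piN X x. \<sigma> (s @ [S]) = {y})"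
    if s: "set s \<subseteq> piN X x" for s
  proof -
    define C where "C = {{y}|y. y \<in> topspace X \<and> (\<forall>S\<in>piN X x. \<sigma> (s @ [S]) \<noteq> {y})}"
    have "\<not> pi_network X x C"
    proof
      assume "pi_network X x C"
      then have "C \<in> piN X x" by (auto simp: piN_def C_def)
      then have "\<sigma> (s @ [C]) \<in> C" using strat_legal[OF win s] by blast
      then show False using \<open>C \<in> piN X x\<close> by (auto simp: C_def)
    qed
    then obtain U where U: "openin X U" "x \<in> U" "\<forall>G\<in>C. \<not> G \<subseteq> U"
    proof -
      have "\<forall>A\<in>C. A \<noteq> {} \<and> A \<subseteq> topspace X" by (auto simp: C_def)
      with \<open>\<not> pi_network X x C\<close> show ?thesis using that unfolding pi_network_def by blast
    qed
    have "\<forall>y\<in>U. \<exists>S\<in>piN X x. \<sigma> (s @ [S]) = {y}"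
    proof
      fix y assume "y \<in> U"
      then have "y \<in> topspace X" using U(1) openin_subset by blast
      with \<open>y \<in> U\<close> U(3) show "\<exists>S\<in>piN X x. \<sigma> (s @ [S]) = {y}"
        unfolding C_def by blast
    qed
    with U show ?thesis by blast
  qed
  show ?thesis unfolding supertight_at_def
  proof (intro allI impI)
    fix P assume P: "pi_network X x P \<and> (\<forall>A\<in>P. countable A)"
    have "\<forall>s\<in>{s. set s \<subseteq> piN X x}. \<exists>A. A \<in> P \<and> (\<forall>y\<in>A. \<exists>S\<in>piN X x. \<sigma> (s @ [S]) = {y})"
    proof
      fix s assume "s \<in> {s. set s \<subseteq> piN X x}"
      then obtain W where W: "openin X W" "x \<in> W" "\<forall>y\<in>W. \<exists>S\<in>piN X x. \<sigma> (s @ [S]) = {y}"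
        using L2 by (metis mem_Collect_eq)
      then obtain A where "A \<in> P" "A \<subseteq> W" using P unfolding pi_network_def by blast
      then show "\<exists>A. A \<in> P \<and> (\<forall>y\<in>A. \<exists>S\<in>piN X x. \<sigma> (s @ [S]) = {y})" using W by blast
    qed
    then obtain Af where Af: "\<And>s. set s \<subseteq> piN X x \<Longrightarrow> Af s \<in> P \<and> (\<forall>y\<in>Af s. \<exists>S\<in>piN X x. \<sigma> (s @ [S]) = {y})"
      by (metis (no_types, lifting) bchoice mem_Collect_eq)
    have "\<forall>sy. \<exists>S. (set (fst sy) \<subseteq> piN X x \<and> snd sy \<in> Af (fst sy)) \<longrightarrow> S \<in> piN X x \<and> \<sigma> (fst sy @ [S]) = {snd sy}"
      using Af by blast
    then obtain M0 where M0: "\<And>sy. set (fst sy) \<subseteq> piN X x \<Longrightarrow> snd sy \<in> Af (fst sy) \<Longrightarrow> M0 sy \<in> piN X x \<and> \<sigma> (fst sy @ [M0 sy]) = {snd sy}"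
      by metis
    define M where "M s y = M0 (s, y)" for s y
    have M: "M s y \<in> piN X x" "\<sigma> (s @ [M s y]) = {y}" if "set s \<subseteq> piN X x" "y \<in> Af s" for s y
      using M0[of "(s,y)"] that by (auto simp: M_def)
    define lev where "lev = rec_nat {[]} (\<lambda>n L. \<Union>s\<in>L. (\<lambda>y. s @ [M s y]) ` Af s)"
    have lev0: "lev 0 = {[]}" and levS: "lev (Suc n) = (\<Union>s\<in>lev n. (\<lambda>y. s @ [M s y]) ` Af s)" for n
      by (simp_all add: lev_def)
    have levp: "countable (lev n) \<and> (\<forall>s\<in>lev n. set s \<subseteq> piN X x)" for n
    proof (induction n)
      case 0 show ?case by (simp add: lev0)
    next
      case (Suc n)
      have "countable (lev (Suc n))" unfolding levS
        using Suc Af P by (intro countable_UN) auto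
      moreover have "\<forall>s\<in>lev (Suc n). set s \<subseteq> piN X x"
        unfolding levS using Suc M(1) by auto
      ultimately show ?case by blast
    qed
    define Q where "Q = Af ` (\<Union>n. lev n)"
    have QP: "Q \<subseteq> P" using levp Af by (auto simp: Q_def)
    have cQ: "countable Q" unfolding Q_def using levp by auto
    have "pi_network X x Q"
      unfolding pi_network_def
    proof (intro conjI allI impI)
      show "\<forall>A\<in>Q. A \<noteq> {} \<and> A \<subseteq> topspace X" using QP P unfolding pi_network_def by blast
    next
      fix U assume U: "openin X U \<and> x \<in> U"
      show "\<exists>A\<in>Q. A \<subseteq> U"
      proof (rule ccontr)
        assume no: "\<not> (\<exists>A\<in>Q. A \<subseteq> U)"
        define yy where "yy s = (SOME y. y \<in> Af s \<and> y \<notin> U)" for s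
        have yy: "yy s \<in> Af s \<and> yy s \<notin> U" if "s \<in> lev n" for s n
        proof -
          have "Af s \<in> Q" using that by (auto simp: Q_def)
          then have "\<exists>y. y \<in> Af s \<and> y \<notin> U" using no by blast
          then show ?thesis unfolding yy_def by (rule someI_ex)
        qed
        define p where "p = rec_nat [] (\<lambda>n s. s @ [M s (yy s)])"
        have p0: "p 0 = []" and pS: "p (Suc n) = p n @ [M (p n) (yy (p n))]" for n
          by (simp_all add: p_def)
        have plev: "p n \<in> lev n" for n
        proof (induction n)
          case 0 show ?case by (simp add: p0 lev0)
        next
          case (Suc n) then show ?case using yy[OF Suc] by (auto simp: pS levS)
        qed
        define f where "f n = M (p n) (yy (p n))" for n
        have pf: "p n = map f [0..<n]" for n
          by (induction n) (simp_all add: p0 pS f_def)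
        have fA: "\<forall>n. f n \<in> piN X x" using plev levp yy M(1) unfolding f_def by blast
        have resp: "\<sigma> (map f [0..<Suc n]) = {yy (p n)}" for n
        proof -
          have "map f [0..<Suc n] = p n @ [f n]" by (simp add: pf)
          then show ?thesis using M(2) plev levp yy unfolding f_def by metis
        qed
        have "range (\<lambda>n. \<sigma> (map f [0..<Suc n])) \<in> piN X x" using win fA by blast
        then obtain n where "\<sigma> (map f [0..<Suc n]) \<subseteq> U"
          using U unfolding piN_def pi_network_def by blast
        then show False using resp yy[OF plev] by simp
      qed
    qed
    then show "\<exists>Q\<subseteq>P. countable Q \<and> pi_network X x Q" using QP cQ by blast
  qed
qed

end
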